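(* If $\mathfrak{h}$ is a finite-dimensional complex Lie algebra, then $\mathcal{R}^i_1(\mathcal{C}^\bullet\mathfrak{h})$ is finite for all $i$. In particular, the cdga $\mathcal{C}^\bullet\mathfrak{h}$ has trivial resonance in degree $i$ (i.e. $0$ is an isolated point of $\mathcal{R}^i_1(\mathcal{C}^\bullet\mathfrak{h})$) whenever $H^i(\mathfrak{h})\neq 0$.
   Context: $\mathcal{C}^\bullet\mathfrak{h}=(\bigwedge^\bullet\mathfrak{h}^*,d)$ is the Chevalley–Eilenberg cochain cdga of $\mathfrak{h}$, with cohomology $H^\bullet(\mathfrak{h})$ (Lie algebra cohomology with trivial coefficients $\mathbb{C}$). For $\omega\in H^1(\mathfrak{h})=\mathrm{Hom}(\mathfrak{h}/[\mathfrak{h},\mathfrak{h}],\mathbb{C})$, ${}_\omega\mathbb{C}$ denotes the one-dimensional $\mathfrak{h}$-module on which $x$ acts by $\omega(x)$; then $\mathcal{R}^i_r(\mathcal{C}^\bullet\mathfrak{h})=\{\omega\in H^1(\mathfrak{h}):\dim H^i(\mathfrak{h},{}_\omega\mathbb{C})\ge r\}$ (equivalently, the set of closed $\omega\in\mathfrak{h}^*$ for which the complex $(\bigwedge^\bullet\mathfrak{h}^*, d+\omega\wedge\cdot)$ has $i$-th cohomology of dimension $\ge r$). *)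

theory Defs
  imports "HOL-Analysis.Analysis" "HOL-Library.Function_Algebras"
begin

text \<open>A finite-dimensional complex Lie algebra h of dimension n is given by a basis
  e_0,...,e_(n-1) and structure constants: [e_a, e_b] = sum over m<n of c a b m e_m.\<close>

definition lie_structure :: "nat \<Rightarrow> (nat \<Rightarrow> nat \<Rightarrow> nat \<Rightarrow> complex) \<Rightarrow> bool" where
  "lie_structure n c \<longleftrightarrow>
     (\<forall>a<n. \<forall>m<n. c a a m = 0) \<and>
     (\<forall>a<n. \<forall>b<n. \<forall>m<n. c a b m = - c b a m) \<and>
     (\<forall>a<n. \<forall>b<n. \<forall>d<n. \<forall>p<n.
        (\<Sum>m<n. c a b m * c m d p + c b d m * c m a p + c d a m * c m b p) = 0)"

definition cscale :: "complex \<Rightarrow> ('a \<Rightarrow> complex) \<Rightarrow> ('a \<Rightarrow> complex)" where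
  "cscale a f = (\<lambda>x. a * f x)"

definition cdim :: "('a \<Rightarrow> complex) set \<Rightarrow> nat" where
  "cdim S = vector_space.dim cscale S"

definition remove_nth :: "nat \<Rightarrow> 'a list \<Rightarrow> 'a list" where
  "remove_nth j xs = take j xs @ drop (Suc j) xs"

text \<open>An i-cochain (element of the i-th exterior power of the dual of h) is an alternating
  i-linear form on h, represented by its values on tuples of basis vectors.\<close>
definition cochains :: "nat \<Rightarrow> nat \<Rightarrow> (nat list \<Rightarrow> complex) set" where
  "cochains n i = {f.
     (\<forall>xs. f xs \<noteq> 0 \<longrightarrow> length xs = i \<and> set xs \<subseteq> {..<n}) \<and>
     (\<forall>xs. \<not> distinct xs \<longrightarrow> f xs = 0) \<and>
     (\<forall>xs j k. j < k \<and> k < length xs \<longrightarrow> f (xs[j := xs ! k, k := xs ! j]) = - f xs)}"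

text \<open>Chevalley--Eilenberg differential with coefficients in the one-dimensional module
  on which x acts by omega(x), where omega(e_m) = om m; i.e. d + omega wedge.
  It maps i-cochains to (i+1)-cochains.\<close>
definition ce_diff :: "nat \<Rightarrow> (nat \<Rightarrow> nat \<Rightarrow> nat \<Rightarrow> complex) \<Rightarrow> (nat \<Rightarrow> complex) \<Rightarrow> nat
     \<Rightarrow> (nat list \<Rightarrow> complex) \<Rightarrow> (nat list \<Rightarrow> complex)" where
  "ce_diff n c om i f = (\<lambda>xs.
     if length xs = Suc i \<and> set xs \<subseteq> {..<n} then
       (\<Sum>j<Suc i. (-1) ^ j * om (xs ! j) * f (remove_nth j xs)) +
       (\<Sum>k<Suc i. \<Sum>j<k. (-1) ^ (j + k) *
          (\<Sum>m<n. c (xs ! j) (xs ! k) m * f (m # remove_nth j (remove_nth k xs))))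
     else 0)"

definition cohom_dim :: "nat \<Rightarrow> (nat \<Rightarrow> nat \<Rightarrow> nat \<Rightarrow> complex) \<Rightarrow> (nat \<Rightarrow> complex) \<Rightarrow> nat \<Rightarrow> nat" where
  "cohom_dim n c om i =
     cdim {f \<in> cochains n i. ce_diff n c om i f = 0} -
     (if i = 0 then 0 else cdim (ce_diff n c om (i - 1) ` cochains n (i - 1)))"

text \<open>H^1(h) = Hom(h/[h,h], C): linear functionals on h (given by their values on the basis,
  zero outside indices < n) vanishing on [h,h].\<close>
definition H1 :: "nat \<Rightarrow> (nat \<Rightarrow> nat \<Rightarrow> nat \<Rightarrow> complex) \<Rightarrow> (nat \<Rightarrow> complex) set" where
  "H1 n c = {om. (\<forall>m\<ge>n. om m = 0) \<and> (\<forall>a<n. \<forall>b<n. (\<Sum>m<n. c a b m * om m) = 0)}"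

definition resonance :: "nat \<Rightarrow> (nat \<Rightarrow> nat \<Rightarrow> nat \<Rightarrow> complex) \<Rightarrow> nat \<Rightarrow> nat \<Rightarrow> (nat \<Rightarrow> complex) set" where
  "resonance n c i r = {om \<in> H1 n c. cohom_dim n c om i \<ge> r}"

definition isolated_zero :: "nat \<Rightarrow> (nat \<Rightarrow> complex) set \<Rightarrow> bool" where
  "isolated_zero n R \<longleftrightarrow> (\<lambda>_. 0) \<in> R \<and>
     (\<exists>e>0. \<forall>om\<in>R. om \<noteq> (\<lambda>_. 0) \<longrightarrow> (\<exists>m<n. e \<le> cmod (om m)))"

end

theory Submission
  imports Defs
begin

interpretation cs: vector_space "cscale :: complex \<Rightarrow> ('a \<Rightarrow> complex) \<Rightarrow> ('a \<Rightarrow> complex)"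
  by unfold_locales (auto simp: cscale_def fun_eq_iff algebra_simps)

lemma cscale_apply[simp]: "cscale a f x = a * f x" by (simp add: cscale_def)

lemma ce_diff_add: "ce_diff n c om i (f + g) = ce_diff n c om i f + ce_diff n c om i g"
  unfolding ce_diff_def
  by (auto simp: fun_eq_iff algebra_simps sum.distrib)

lemma ce_diff_scale: "ce_diff n c om i (cscale k f) = cscale k (ce_diff n c om i f)"
  unfolding ce_diff_def
  by (auto simp: fun_eq_iff algebra_simps sum_distrib_left)

lemma ce_diff_zero: "ce_diff n c om i 0 = 0"
  unfolding ce_diff_def by (auto simp: fun_eq_iff)

definition W :: "nat \<Rightarrow> (nat \<Rightarrow> complex) \<Rightarrow> nat \<Rightarrow> (nat list \<Rightarrow> complex) \<Rightarrow> (nat list \<Rightarrow> complex)" where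
  "W n om i f = (\<lambda>xs. if length xs = Suc i \<and> set xs \<subseteq> {..<n} then
       (\<Sum>j<Suc i. (-1) ^ j * om (xs ! j) * f (remove_nth j xs)) else 0)"

lemma ce_diff_split: "ce_diff n c om i f = ce_diff n c (\<lambda>_. 0) i f + W n om i f"
  unfolding ce_diff_def W_def by (auto simp: fun_eq_iff)

definition io :: "nat \<Rightarrow> (nat list \<Rightarrow> complex) \<Rightarrow> (nat list \<Rightarrow> complex)" where
  "io a f = (\<lambda>xs. f (a # xs))"

lemma remove_nth_Suc[simp]: "remove_nth (Suc j) (a # xs) = a # remove_nth j xs"
  by (simp add: remove_nth_def)
lemma remove_nth_0[simp]: "remove_nth 0 (a # xs) = xs"
  by (simp add: remove_nth_def)

lemma W_io:
  assumes f: "f \<in> cochains n i" and a: "a < n"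
  shows "io a (W n om i f) + W n om (i - 1) (io a f) = cscale (om a) f"
proof (rule ext)
  fix xs
  have supp: "\<And>ys. f ys \<noteq> 0 \<Longrightarrow> length ys = i \<and> set ys \<subseteq> {..<n}" using f by (auto simp: cochains_def)
  show "(io a (W n om i f) + W n om (i - 1) (io a f)) xs = cscale (om a) f xs"
  proof (cases "length xs = i \<and> set xs \<subseteq> {..<n}")
    case True
    have e1: "io a (W n om i f) xs = om a * f xs +
       (\<Sum>j<i. (-1) ^ Suc j * om (xs ! j) * f (a # remove_nth j xs))"
    proof -
      have "io a (W n om i f) xs = (\<Sum>j<Suc i. (-1) ^ j * om ((a#xs) ! j) * f (remove_nth j (a#xs)))"
        using True a unfolding io_def W_def by simp
      also have "\<dots> = om a * f xs +
       (\<Sum>j<i. (-1) ^ Suc j * om (xs ! j) * f (a # remove_nth j xs))"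
        by (subst sum.lessThan_Suc_shift) simp
      finally show ?thesis .
    qed
    show ?thesis
    proof (cases i)
      case 0
      then show ?thesis using e1 True a unfolding W_def io_def by simp
    next
      case (Suc i')
      have "W n om (i - 1) (io a f) xs = (\<Sum>j<i. (-1) ^ j * om (xs ! j) * f (a # remove_nth j xs))"
        using True Suc unfolding W_def io_def by simp
      then show ?thesis using e1 by (simp add: sum.distrib[symmetric])
    qed
  next
    case False
    have "f xs = 0" using supp False by blast
    moreover have "io a (W n om i f) xs = 0" using False unfolding io_def W_def by auto
    moreover have "W n om (i - 1) (io a f) xs = 0"
    proof (cases "length xs = Suc (i - 1) \<and> set xs \<subseteq> {..<n}")
      case True
      have "\<And>j. f (a # remove_nth j xs) = 0"
      proof -
        fix j
        show "f (a # remove_nth j xs) = 0"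
        proof (rule ccontr)
          assume "f (a # remove_nth j xs) \<noteq> 0"
          hence "length (a # remove_nth j xs) = i" using supp by blast
          moreover have "j < length xs \<Longrightarrow> length (remove_nth j xs) = length xs - 1"
            by (simp add: remove_nth_def)
          ultimately show False using True False
            apply (cases "j < length xs") apply (auto simp: remove_nth_def) done
        qed
      qed
      then show ?thesis using True unfolding W_def io_def by simp
    next
      case False
      then show ?thesis unfolding W_def by (simp only: if_False)
    qed
    ultimately show ?thesis by simp
  qed
qed


lemma io_add: "io a (f + g) = io a f + io a g" by (simp add: io_def fun_eq_iff)
lemma io_scale: "io a (cscale k f) = cscale k (io a f)" by (simp add: io_def fun_eq_iff)
lemma io_zero: "io a 0 = 0" by (simp add: io_def fun_eq_iff)

definition KK where
  "KK n c om a i f = io a (ce_diff n c om i f) + ce_diff n c om (i - 1) (io a f)"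

lemma KK_add: "KK n c om a i (f + g) = KK n c om a i f + KK n c om a i g"
  unfolding KK_def by (simp add: ce_diff_add io_add algebra_simps)
lemma KK_scale: "KK n c om a i (cscale k f) = cscale k (KK n c om a i f)"
  unfolding KK_def by (simp add: ce_diff_scale io_scale fun_eq_iff algebra_simps)

lemma KK_split:
  assumes "f \<in> cochains n i" "a < n"
  shows "KK n c om a i f = KK n c (\<lambda>_. 0) a i f + cscale (om a) f"
proof -
  have "KK n c om a i f = KK n c (\<lambda>_. 0) a i f + (io a (W n om i f) + W n om (i - 1) (io a f))"
    unfolding KK_def
    by (subst (1 2) ce_diff_split) (simp add: io_add algebra_simps)
  then show ?thesis using W_io[OF assms] by simp
qed

lemma io_cochain:
  assumes f: "f \<in> cochains n i" and a: "a < n"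
  shows "io a f \<in> cochains n (i - 1)"
proof -
  have s: "\<And>xs. f xs \<noteq> 0 \<Longrightarrow> length xs = i \<and> set xs \<subseteq> {..<n}"
    and d: "\<And>xs. \<not> distinct xs \<Longrightarrow> f xs = 0"
    and al: "\<And>xs j k. j < k \<and> k < length xs \<Longrightarrow> f (xs[j := xs ! k, k := xs ! j]) = - f xs"
    using f unfolding cochains_def by blast+
  have A: "\<forall>xs. f (a # xs) \<noteq> 0 \<longrightarrow> length xs = i - 1 \<and> set xs \<subseteq> {..<n}"
  proof (intro allI impI)
    fix xs assume "f (a # xs) \<noteq> 0"
    then have "length (a # xs) = i \<and> set (a # xs) \<subseteq> {..<n}" by (rule s)
    then show "length xs = i - 1 \<and> set xs \<subseteq> {..<n}" by auto
  qed
  have B: "\<forall>xs. \<not> distinct xs \<longrightarrow> f (a # xs) = 0"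
  proof (intro allI impI)
    fix xs :: "nat list" assume "\<not> distinct xs"
    then have "\<not> distinct (a # xs)" by simp
    then show "f (a # xs) = 0" by (rule d)
  qed
  have C: "\<forall>xs j k. j < k \<and> k < length xs \<longrightarrow> f (a # xs[j := xs ! k, k := xs ! j]) = - f (a # xs)"
  proof (intro allI impI)
    fix xs :: "nat list" and j k assume "j < k \<and> k < length xs"
    then have "Suc j < Suc k \<and> Suc k < length (a # xs)" by simp
    then have "f ((a#xs)[Suc j := (a#xs) ! Suc k, Suc k := (a#xs) ! Suc j]) = - f (a#xs)" by (rule al)
    then show "f (a # xs[j := xs ! k, k := xs ! j]) = - f (a # xs)" by simp
  qed
  show ?thesis unfolding cochains_def io_def using A B C by simp
qed

lemma io_cochain0:
  assumes f: "f \<in> cochains n 0"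
  shows "io a f = 0"
  using f unfolding cochains_def io_def by (auto simp: fun_eq_iff)

lemma cochains_add:
  assumes f: "f \<in> cochains n i" and g: "g \<in> cochains n i"
  shows "f + g \<in> cochains n i"
proof -
  have s: "\<And>xs. f xs \<noteq> 0 \<Longrightarrow> length xs = i \<and> set xs \<subseteq> {..<n}"
    and d: "\<And>xs. \<not> distinct xs \<Longrightarrow> f xs = 0"
    and al: "\<And>xs j k. j < k \<and> k < length xs \<Longrightarrow> f (xs[j := xs ! k, k := xs ! j]) = - f xs"
    using f unfolding cochains_def by blast+
  have s': "\<And>xs. g xs \<noteq> 0 \<Longrightarrow> length xs = i \<and> set xs \<subseteq> {..<n}"
    and d': "\<And>xs. \<not> distinct xs \<Longrightarrow> g xs = 0"
    and al': "\<And>xs j k. j < k \<and> k < length xs \<Longrightarrow> g (xs[j := xs ! k, k := xs ! j]) = - g xs"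
    using g unfolding cochains_def by blast+
  have A: "\<forall>xs. (f + g) xs \<noteq> 0 \<longrightarrow> length xs = i \<and> set xs \<subseteq> {..<n}"
  proof (intro allI impI)
    fix xs assume "(f + g) xs \<noteq> 0"
    then have "f xs \<noteq> 0 \<or> g xs \<noteq> 0" by auto
    then show "length xs = i \<and> set xs \<subseteq> {..<n}" using s s' by blast
  qed
  have B: "\<forall>xs. \<not> distinct xs \<longrightarrow> (f + g) xs = 0" using d d' by simp
  have C: "\<forall>xs j k. j < k \<and> k < length xs \<longrightarrow> (f + g) (xs[j := xs ! k, k := xs ! j]) = - (f + g) xs"
    using al al' by simp
  show ?thesis unfolding cochains_def using A B C by (simp only: mem_Collect_eq)
qed

lemma cochains_scale: "f \<in> cochains n i \<Longrightarrow> cscale k f \<in> cochains n i"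
  unfolding cochains_def by auto

lemma cochains_zero: "0 \<in> cochains n i"
  unfolding cochains_def by auto

lemma fsum_apply: "(\<Sum>x\<in>F. g x) y = (\<Sum>x\<in>F. g x y)"
  by (induction F rule: infinite_finite_induct) auto

definition delta :: "'a \<Rightarrow> 'a \<Rightarrow> complex" where
  "delta x = (\<lambda>y. if y = x then 1 else 0)"

lemma supp_span:
  assumes "finite L" "\<forall>x. f x \<noteq> 0 \<longrightarrow> x \<in> L"
  shows "f \<in> cs.span (delta ` L)"
proof -
  have "f = (\<Sum>x\<in>L. cscale (f x) (delta x))"
  proof (rule ext)
    fix y
    show "f y = (\<Sum>x\<in>L. cscale (f x) (delta x)) y"
      unfolding fsum_apply using assms
      by (cases "y \<in> L") (auto simp: delta_def if_distrib cong: if_cong)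
  qed
  also have "\<dots> \<in> cs.span (delta ` L)"
    by (intro cs.span_sum cs.span_scale cs.span_base) auto
  finally show ?thesis .
qed

definition LL :: "nat \<Rightarrow> nat \<Rightarrow> nat list set" where
  "LL n i = {xs. set xs \<subseteq> {..<n} \<and> length xs = i}"

lemma finite_LL: "finite (LL n i)"
  unfolding LL_def by (rule finite_lists_length_eq) simp

lemma cochains_span: "cochains n i \<subseteq> cs.span (delta ` LL n i)"
  using supp_span[OF finite_LL] unfolding cochains_def LL_def by auto

lemma ce_diff_span: "ce_diff n c om i f \<in> cs.span (delta ` LL n (Suc i))"
  by (rule supp_span[OF finite_LL]) (auto simp: ce_diff_def LL_def)

lemma card_le_dim_fin:
  assumes "cs.independent S" "S \<subseteq> V" "V \<subseteq> cs.span D" "finite D"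
  shows "card S \<le> cs.dim V"
proof -
  obtain B1 where B1: "B1 \<subseteq> V" "cs.independent B1" "V \<subseteq> cs.span B1" "card B1 = cs.dim V"
    by (rule cs.basis_exists)
  have "finite B1" using cs.independent_span_bound[OF assms(4) B1(2)] B1(1) assms(3) by auto
  then show ?thesis
    using cs.independent_span_bound[OF _ assms(1), of B1] B1 assms(2) by auto
qed

lemma T_sum:
  fixes T :: "('a \<Rightarrow> complex) \<Rightarrow> ('a \<Rightarrow> complex)"
  assumes add: "\<And>f g. T (f+g) = T f + T g"
  shows "T (\<Sum>x\<in>F. g x) = (\<Sum>x\<in>F. T (g x))"
proof -
  have z: "T 0 = 0" using add[of 0 0] by simp
  show ?thesis
  proof (induction F rule: infinite_finite_induct)
    case (infinite A) then show ?case by (metis sum.infinite z)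
  next
    case empty then show ?case by (simp only: sum.empty z)
  next
    case (insert x F)
    have "T (sum g (insert x F)) = T (g x + sum g F)" by (simp only: sum.insert[OF insert(1,2)])
    also have "\<dots> = T (g x) + (\<Sum>x\<in>F. T (g x))" by (simp only: add insert(3))
    also have "\<dots> = (\<Sum>x\<in>insert x F. T (g x))" by (simp only: sum.insert[OF insert(1,2)])
    finally show ?case .
  qed
qed

lemma eig_indep:
  fixes T :: "('a \<Rightarrow> complex) \<Rightarrow> ('a \<Rightarrow> complex)"
  assumes add: "\<And>f g. T (f+g) = T f + T g" and sc: "\<And>k f. T (cscale k f) = cscale k (T f)"
    and fin: "finite F" and ev: "\<And>\<mu>. \<mu> \<in> F \<Longrightarrow> v \<mu> \<noteq> 0 \<and> T (v \<mu>) = cscale \<mu> (v \<mu>)"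
  shows "(\<Sum>\<mu>\<in>F. cscale (u \<mu>) (v \<mu>)) = 0 \<Longrightarrow> \<forall>\<mu>\<in>F. u \<mu> = 0"
  using fin ev
proof (induction F arbitrary: u rule: finite_induct)
  case empty
  then show ?case by simp
next
  case (insert l F)
  let ?S = "\<Sum>\<mu>\<in>F. cscale (u \<mu>) (v \<mu>)"
  have h: "cscale (u l) (v l) + ?S = 0" using insert.prems(1)
    by (subst (asm) sum.insert[OF insert.hyps(1,2)])
  have "T (cscale (u l) (v l) + ?S) = 0"
    using h add[of 0 0] by simp
  moreover have "T (cscale (u l) (v l) + ?S) = cscale (u l) (T (v l)) + (\<Sum>\<mu>\<in>F. cscale (u \<mu>) (T (v \<mu>)))"
    by (simp only: add T_sum[OF add] sc)
  moreover have "(\<Sum>\<mu>\<in>F. cscale (u \<mu>) (T (v \<mu>))) = (\<Sum>\<mu>\<in>F. cscale (u \<mu> * \<mu>) (v \<mu>))"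
  proof (rule sum.cong)
    fix \<mu> assume "\<mu> \<in> F"
    then have "T (v \<mu>) = cscale \<mu> (v \<mu>)" using insert.prems(2) by blast
    then show "cscale (u \<mu>) (T (v \<mu>)) = cscale (u \<mu> * \<mu>) (v \<mu>)" by (simp add: cscale_def fun_eq_iff)
  qed simp
  moreover have "cscale (u l) (T (v l)) = cscale (u l * l) (v l)"
  proof -
    have "T (v l) = cscale l (v l)" using insert.prems(2) by blast
    then show ?thesis by (simp add: cscale_def fun_eq_iff)
  qed
  ultimately have h2: "cscale (u l * l) (v l) + (\<Sum>\<mu>\<in>F. cscale (u \<mu> * \<mu>) (v \<mu>)) = 0"
    by simp
  have "(\<Sum>\<mu>\<in>F. cscale (u \<mu> * (\<mu> - l)) (v \<mu>)) = 0"
  proof (rule ext)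
    fix x
    have A: "(u l * l) * v l x + (\<Sum>\<mu>\<in>F. (u \<mu> * \<mu>) * v \<mu> x) = 0"
      using fun_cong[OF h2, of x] by (simp add: fsum_apply)
    have B: "u l * v l x + (\<Sum>\<mu>\<in>F. u \<mu> * v \<mu> x) = 0"
      using fun_cong[OF h, of x] by (simp add: fsum_apply)
    have "(\<Sum>\<mu>\<in>F. (u \<mu> * \<mu>) * v \<mu> x) - l * (\<Sum>\<mu>\<in>F. u \<mu> * v \<mu> x)
       = ((u l * l) * v l x + (\<Sum>\<mu>\<in>F. (u \<mu> * \<mu>) * v \<mu> x)) - l * (u l * v l x + (\<Sum>\<mu>\<in>F. u \<mu> * v \<mu> x))"
      by (simp add: algebra_simps)
    also have "\<dots> = 0" by (simp only: A B mult_zero_right diff_zero)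
    finally have "(\<Sum>\<mu>\<in>F. (u \<mu> * \<mu>) * v \<mu> x) - l * (\<Sum>\<mu>\<in>F. u \<mu> * v \<mu> x) = 0" .
    then show "(\<Sum>\<mu>\<in>F. cscale (u \<mu> * (\<mu> - l)) (v \<mu>)) x = 0 x"
      by (simp add: fsum_apply sum_distrib_left sum_subtractf[symmetric] algebra_simps)
  qed
  moreover have ev2: "\<And>\<mu>. \<mu> \<in> F \<Longrightarrow> v \<mu> \<noteq> 0 \<and> T (v \<mu>) = cscale \<mu> (v \<mu>)"
    using insert.prems(2) by blast
  ultimately have "\<forall>\<mu>\<in>F. u \<mu> * (\<mu> - l) = 0" using insert.IH[of "\<lambda>\<mu>. u \<mu> * (\<mu> - l)"] by blast
  hence uz: "\<forall>\<mu>\<in>F. u \<mu> = 0" using insert.hyps(2) by auto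
  hence "?S = 0" by simp
  hence "cscale (u l) (v l) = 0" using h by simp
  moreover have "v l \<noteq> 0" using insert.prems(2)[of l] by blast
  ultimately have "u l = 0" by (auto simp: fun_eq_iff)
  then show ?case using uz by simp
qed

lemma eig_finite:
  fixes T :: "('a \<Rightarrow> complex) \<Rightarrow> ('a \<Rightarrow> complex)"
  assumes add: "\<And>f g. T (f+g) = T f + T g" and sc: "\<And>k f. T (cscale k f) = cscale k (T f)"
    and S: "S \<subseteq> cs.span D" and D: "finite D"
  shows "finite {\<mu>. \<exists>f\<in>S. f \<noteq> 0 \<and> T f = cscale \<mu> f}"
proof -
  define E where "E = {\<mu>. \<exists>f\<in>S. f \<noteq> 0 \<and> T f = cscale \<mu> f}"
  define v where "v \<mu> = (SOME f. f \<in> S \<and> f \<noteq> 0 \<and> T f = cscale \<mu> f)" for \<mu>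
  have vp: "v \<mu> \<in> S \<and> v \<mu> \<noteq> 0 \<and> T (v \<mu>) = cscale \<mu> (v \<mu>)" if mu: "\<mu> \<in> E" for \<mu>
  proof -
    obtain f where "f \<in> S \<and> f \<noteq> 0 \<and> T f = cscale \<mu> f" using mu unfolding E_def by blast
    then show ?thesis unfolding v_def
      using someI_ex[of "\<lambda>f. f \<in> S \<and> f \<noteq> 0 \<and> T f = cscale \<mu> f"] by blast
  qed
  have bound: "card F \<le> card D" if F: "F \<subseteq> E" "finite F" for F
  proof -
    have inj: "inj_on v F"
    proof (rule inj_onI)
      fix x y assume xy: "x \<in> F" "y \<in> F" "v x = v y"
      have "T (v x) = cscale x (v x)" using vp[of x] xy F by blast
      moreover have "T (v y) = cscale y (v y)" using vp[of y] xy F by blast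
      ultimately have e: "cscale x (v x) = cscale y (v x)" using xy by metis
      obtain z where z: "v x z \<noteq> 0" using vp[of x] xy F by (auto simp: fun_eq_iff)
      have "x * v x z = y * v x z" using fun_cong[OF e, of z] by simp
      then show "x = y" using z by simp
    qed
    have ind: "cs.independent (v ` F)"
    proof (rule cs.independent_if_scalars_zero)
      show "finite (v ` F)" using F by simp
      fix g x assume g: "(\<Sum>x\<in>v ` F. cscale (g x) x) = 0" and x: "x \<in> v ` F"
      have s0: "(\<Sum>\<mu>\<in>F. cscale (g (v \<mu>)) (v \<mu>)) = 0"
        using g by (simp add: sum.reindex[OF inj])
      have ev': "\<And>\<mu>. \<mu>\<in>F \<Longrightarrow> v \<mu> \<noteq> 0 \<and> T (v \<mu>) = cscale \<mu> (v \<mu>)" using vp F by blast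
      have "\<forall>\<mu>\<in>F. g (v \<mu>) = 0"
        by (rule eig_indep[OF add sc F(2) ev' s0])
      then show "g x = 0" using x by auto
    qed
    have "v ` F \<subseteq> cs.span D" using vp F S by auto
    hence "card (v ` F) \<le> card D" using cs.independent_span_bound[OF D ind] by auto
    then show ?thesis using card_image[OF inj] by simp
  qed
  have "finite E"
  proof (rule ccontr)
    assume "infinite E"
    then obtain F where F: "finite F" "card F = Suc (card D)" "F \<subseteq> E"
      using infinite_arbitrarily_large[of E "Suc (card D)"] by blast
    then show False using bound[OF F(3) F(1)] by simp
  qed
  then show ?thesis unfolding E_def .
qed


lemma resonance_eig:
  assumes om: "om \<in> resonance n c i 1" and a: "a < n"
  shows "\<exists>f\<in>cochains n i. f \<noteq> 0 \<and> KK n c (\<lambda>_. 0) a i f = cscale (- om a) f"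
proof (rule ccontr)
  assume ne: "\<not> ?thesis"
  define K where "K = KK n c om a i"
  define Z where "Z = {f \<in> cochains n i. ce_diff n c om i f = 0}"
  define B' where "B' = (if i = 0 then {0} else ce_diff n c om (i - 1) ` cochains n (i - 1))"
  have Kadd: "\<And>f g. K (f+g) = K f + K g" by (simp add: K_def KK_add)
  have Ksc: "\<And>k f. K (cscale k f) = cscale k (K f)" by (simp add: K_def KK_scale)
  interpret lK: Vector_Spaces.linear cscale cscale K
    by (auto simp: Vector_Spaces.linear_iff cs.vector_space_axioms Kadd Ksc)
  have K0: "f = 0" if f: "f \<in> cochains n i" and Kf: "K f = 0" for f
  proof -
    have "KK n c (\<lambda>_. 0) a i f + cscale (om a) f = 0"
      using Kf KK_split[OF f a, of c om] by (simp add: K_def)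
    hence "KK n c (\<lambda>_. 0) a i f = cscale (- om a) f"
      by (simp add: fun_eq_iff add_eq_0_iff)
    then show ?thesis using ne f by blast
  qed
  have Zsub: "cs.subspace Z"
    unfolding cs.subspace_def Z_def
    by (auto simp: cochains_zero ce_diff_zero cochains_add ce_diff_add cochains_scale ce_diff_scale)
  have spanZ: "cs.span Z = Z" using Zsub by simp
  have inj: "inj_on K Z"
  proof (rule inj_onI)
    fix f g assume fg: "f \<in> Z" "g \<in> Z" "K f = K g"
    have "K (f + cscale (-1) g) = K f + cscale (-1) (K g)" by (simp only: Kadd Ksc)
    also have "\<dots> = 0" using fg(3) by (simp add: fun_eq_iff)
    finally have "f + cscale (-1) g = 0"
      using K0 cochains_add cochains_scale fg(1,2) unfolding Z_def by blast
    then show "f = g" by (simp add: fun_eq_iff)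
  qed
  have KZ: "K ` Z \<subseteq> B'"
  proof
    fix y assume "y \<in> K ` Z"
    then obtain z where z: "z \<in> Z" "y = K z" by blast
    have y: "y = ce_diff n c om (i - 1) (io a z)"
      using z unfolding K_def KK_def Z_def by (simp add: io_zero)
    show "y \<in> B'"
    proof (cases "i = 0")
      case True
      then have "io a z = 0" using io_cochain0 z unfolding Z_def by auto
      then show ?thesis using y True by (simp add: B'_def ce_diff_zero)
    next
      case False
      then show ?thesis using y io_cochain[OF _ a, of z i] z unfolding B'_def Z_def by auto
    qed
  qed
  have B'span: "B' \<subseteq> cs.span (delta ` LL n i)"
  proof (cases "i = 0")
    case True then show ?thesis by (simp add: B'_def cs.span_zero)
  next
    case False
    then show ?thesis using ce_diff_span[of n c om "i - 1"] unfolding B'_def by auto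
  qed
  obtain B0 where B0: "B0 \<subseteq> Z" "cs.independent B0" "Z \<subseteq> cs.span B0" "card B0 = cs.dim Z"
    by (rule cs.basis_exists)
  have spanB0: "cs.span B0 \<subseteq> Z" using cs.span_mono[OF B0(1)] spanZ by simp
  have indK: "cs.independent (K ` B0)"
    using lK.dependent_inj_imageD[of B0] inj_on_subset[OF inj spanB0] B0(2) by blast
  have "card (K ` B0) = card B0" using card_image inj_on_subset[OF inj B0(1)] by blast
  moreover have "card (K ` B0) \<le> cs.dim B'"
    by (rule card_le_dim_fin[OF indK _ B'span]) (use KZ B0(1) finite_LL in auto)
  ultimately have le: "cs.dim Z \<le> cs.dim B'" using B0(4) by simp
  have cd: "cohom_dim n c om i = cs.dim Z - (if i = 0 then 0 else cs.dim B')"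
  proof (cases "i = 0")
    case True then show ?thesis unfolding cohom_dim_def cdim_def Z_def by simp
  next
    case False then show ?thesis unfolding cohom_dim_def cdim_def Z_def B'_def by simp
  qed
  have "cohom_dim n c om i = 0"
  proof (cases "i = 0")
    case True
    have "cs.dim B' \<le> card ({} :: (nat list \<Rightarrow> complex) set)"
      by (rule cs.dim_le_card) (auto simp: B'_def True cs.span_zero)
    hence "cs.dim B' = 0" by simp
    hence "cs.dim Z = 0" using le by linarith
    then show ?thesis using True cd by (simp only: if_True diff_zero)
  next
    case False
    then show ?thesis using le cd by simp
  qed
  moreover have "1 \<le> cohom_dim n c om i" using om unfolding resonance_def by blast
  ultimately show False by linarith
qed

theorem proposition4p1:
  fixes n :: nat and c :: "nat \<Rightarrow> nat \<Rightarrow> nat \<Rightarrow> complex"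
  assumes "lie_structure n c"
  shows "(\<forall>i. finite (resonance n c i 1)) \<and>
         (\<forall>i. cohom_dim n c (\<lambda>_. 0) i \<noteq> 0 \<longrightarrow> isolated_zero n (resonance n c i 1))"
proof -
  have fin: "finite (resonance n c i 1)" for i
  proof -
    define E where "E a = uminus ` {\<mu>. \<exists>f\<in>cochains n i. f \<noteq> 0 \<and> KK n c (\<lambda>_. 0) a i f = cscale \<mu> f}" for a
    have finE: "finite (E a)" for a
      unfolding E_def
      by (rule finite_imageI, rule eig_finite[OF KK_add KK_scale cochains_span finite_imageI[OF finite_LL]])
    have sub: "resonance n c i 1 \<subseteq> (\<lambda>g m. if m < n then g m else 0) ` (PiE {..<n} E)"
    proof
      fix om assume om: "om \<in> resonance n c i 1"
      hence H: "\<forall>m\<ge>n. om m = 0" by (simp add: resonance_def H1_def)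
      have inE: "om a \<in> E a" if aa: "a < n" for a
      proof -
        obtain f where "f \<in> cochains n i" "f \<noteq> 0" "KK n c (\<lambda>_. 0) a i f = cscale (- om a) f"
          using resonance_eig[OF om aa] by blast
        hence "- om a \<in> {\<mu>. \<exists>f\<in>cochains n i. f \<noteq> 0 \<and> KK n c (\<lambda>_. 0) a i f = cscale \<mu> f}" by blast
        then show ?thesis unfolding E_def by (rule rev_image_eqI) simp
      qed
      have "restrict om {..<n} \<in> PiE {..<n} E" using inE by auto
      moreover have "om = (\<lambda>m. if m < n then restrict om {..<n} m else 0)"
        using H by (auto simp: fun_eq_iff)
      ultimately show "om \<in> (\<lambda>g m. if m < n then g m else 0) ` (PiE {..<n} E)"
        by (intro image_eqI[where x="restrict om {..<n}"]) simp_all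
    qed
    show ?thesis by (rule finite_subset[OF sub]) (simp add: finite_PiE finE)
  qed
  have iso: "isolated_zero n (resonance n c i 1)" if h: "cohom_dim n c (\<lambda>_. 0) i \<noteq> 0" for i
  proof -
    define R where "R = resonance n c i 1"
    have z: "(\<lambda>_. 0) \<in> R" using h by (simp add: R_def resonance_def H1_def)
    define M where "M = {cmod (om m) | om m. om \<in> R \<and> m < n \<and> om m \<noteq> 0} \<union> {1}"
    have "M \<subseteq> (\<lambda>(om, m). cmod (om m)) ` (R \<times> {..<n}) \<union> {1}" unfolding M_def by auto
    hence finM: "finite M" by (rule finite_subset) (use fin[of i] in \<open>auto simp: R_def\<close>)
    have pos: "\<forall>x\<in>M. 0 < x" unfolding M_def by auto
    have Mne: "M \<noteq> {}" unfolding M_def by auto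
    have epos: "Min M > 0" using finM Mne pos by simp
    have "\<exists>m<n. Min M \<le> cmod (om m)" if om: "om \<in> R" "om \<noteq> (\<lambda>_. 0)" for om
    proof -
      obtain m where m: "om m \<noteq> 0" using om(2) by auto
      have H: "\<forall>m\<ge>n. om m = 0" using om(1) unfolding R_def resonance_def H1_def by blast
      have "m < n" using H m by (cases "m < n") auto
      then have "cmod (om m) \<in> M" using om m unfolding M_def by blast
      then show ?thesis using \<open>m < n\<close> Min_le[OF finM] by blast
    qed
    then show ?thesis using z epos unfolding isolated_zero_def R_def by blast
  qed
  show ?thesis using fin iso by (intro conjI allI impI)
qed

end
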